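(* Let $q$ be a prime power, $r\ge 1$ an integer, and $\mathcal{S}$ a $q^r$-divisible spanning set of $q^{r+1}$ points in $\mathrm{PG}(v-1,q)$. Then the number of hyperplanes $H$ with $\mathcal{S}\cap H=\emptyset$ is at most $\left(q^{v-r-1}-q+2\right)/2$.
   Context: $\mathrm{PG}(v-1,q)$ is the projective space of $\mathbb{F}_q^v$; points are $1$-dimensional and hyperplanes $(v-1)$-dimensional subspaces of $\mathbb{F}_q^v$. A set $\mathcal{S}$ of points is spanning if its points span $\mathbb{F}_q^v$, and it is $q^r$-divisible if $|\mathcal{S}\cap H|\equiv|\mathcal{S}|\pmod{q^r}$ for every hyperplane $H$. *)

theory Defs
  imports "HOL-Analysis.Analysis"
begin

text \<open>Projective geometry PG(v-1,q) realised in the vector space 'a^'n over the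
finite field 'a (q = CARD('a), v = CARD('n)).\<close>

definition pg_point :: "('a::field ^ 'n) set \<Rightarrow> bool" where
  "pg_point P \<longleftrightarrow> vec.subspace P \<and> vec.dim P = 1"

definition pg_hyperplane :: "('a::field ^ 'n) set \<Rightarrow> bool" where
  "pg_hyperplane H \<longleftrightarrow> vec.subspace H \<and> vec.dim H = CARD('n) - 1"

definition pg_spanning :: "('a::field ^ 'n) set set \<Rightarrow> bool" where
  "pg_spanning S \<longleftrightarrow> vec.span (\<Union> S) = UNIV"

definition pg_divisible :: "nat \<Rightarrow> ('a::field ^ 'n) set set \<Rightarrow> bool" where
  "pg_divisible m S \<longleftrightarrow>
     (\<forall>H. pg_hyperplane H \<longrightarrow> card {P \<in> S. P \<subseteq> H} mod m = card S mod m)"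

end

theory Submission
  imports Defs
begin

definition dotp :: "'a::field^'n \<Rightarrow> 'a^'n \<Rightarrow> 'a" where
  "dotp f x = (\<Sum>i\<in>UNIV. f$i * x$i)"

definition kerf :: "'a::field^'n \<Rightarrow> ('a^'n) set" where
  "kerf f = {x. dotp f x = 0}"

lemma dotp_comm: "dotp f x = dotp x f"
  by (simp add: dotp_def mult.commute)
lemma dotp_add: "dotp f (x + y) = dotp f x + dotp f y"
  by (simp add: dotp_def distrib_left sum.distrib)
lemma dotp_diff: "dotp f (x - y) = dotp f x - dotp f y"
  by (simp add: dotp_def right_diff_distrib sum_subtractf)
lemma dotp_scale: "dotp f (c *s x) = c * dotp f x"
  by (simp add: dotp_def sum_distrib_left algebra_simps)
lemma dotp_add_l: "dotp (f + g) x = dotp f x + dotp g x"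
  by (simp add: dotp_def distrib_right sum.distrib)
lemma dotp_diff_l: "dotp (f - g) x = dotp f x - dotp g x"
  by (simp add: dotp_def left_diff_distrib sum_subtractf)
lemma dotp_scale_l: "dotp (c *s f) x = c * dotp f x"
  by (simp add: dotp_def sum_distrib_left algebra_simps)
lemma dotp_zero[simp]: "dotp f 0 = 0" "dotp 0 x = 0"
  by (simp_all add: dotp_def)
lemma dotp_axis: "dotp f (axis i 1) = f$i"
proof -
  have "dotp f (axis i 1) = (\<Sum>j\<in>UNIV. if j = i then f$j else 0)"
    unfolding dotp_def by (rule sum.cong) (auto simp: axis_def)
  then show ?thesis by simp
qed

lemma kerf_subspace: "vec.subspace (kerf f)"
  unfolding vec.subspace_def kerf_def by (simp add: dotp_add dotp_scale)

lemma nonzero_axis: assumes "(f::'a::field^'n) \<noteq> 0" obtains i where "f$i \<noteq> 0"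
  using assms by (metis vec_eq_iff zero_index)

lemma point_span: assumes "pg_point P" shows "\<exists>p. p \<noteq> 0 \<and> P = vec.span {p}"
proof -
  have sP: "vec.subspace P" and d: "vec.dim P = 1" using assms by (auto simp: pg_point_def)
  obtain B where B: "B \<subseteq> P" "vec.independent B" "P \<subseteq> vec.span B" "card B = vec.dim P"
    by (rule vec.basis_exists)
  then obtain p where "B = {p}" using d by (metis card_1_singletonE)
  moreover have "p \<noteq> 0" using B(2) \<open>B = {p}\<close> vec.dependent_zero by blast
  moreover have "vec.span B \<subseteq> P" using B(1) sP vec.span_minimal by blast
  ultimately show ?thesis using B(3) by blast
qed

lemma span_sub_kerf: "vec.span {p} \<subseteq> kerf f \<longleftrightarrow> dotp f p = 0"
  using vec.span_minimal[OF _ kerf_subspace, of "{p}" f] vec.span_base[of p "{p}"]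
  by (auto simp: kerf_def)

lemma dim_vec_UNIV: "vec.dim (UNIV :: ('a::field^'n) set) = CARD('n)"
  by (simp add: vec.dim_UNIV card_cart_basis)

lemma kerf_hyperplane: assumes "(f::'a::field^'n) \<noteq> 0" shows "pg_hyperplane (kerf f)"
proof -
  obtain i where fi: "f$i \<noteq> 0" using assms nonzero_axis by blast
  define w :: "'a^'n" where "w = axis i 1"
  have dw: "dotp f w \<noteq> 0" using fi by (simp add: w_def dotp_axis)
  obtain B where B: "B \<subseteq> kerf f" "vec.independent B" "kerf f \<subseteq> vec.span B" "card B = vec.dim (kerf f)"
    by (rule vec.basis_exists)
  have fin: "finite B" using B(2) vec.finiteI_independent by blast
  have wn: "w \<notin> vec.span B"
  proof
    assume "w \<in> vec.span B"
    moreover have "vec.span B \<subseteq> kerf f" using B(1) kerf_subspace vec.span_minimal by blast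
    ultimately show False using dw by (auto simp: kerf_def)
  qed
  have wB: "w \<notin> B" using wn vec.span_base by blast
  have ind: "vec.independent (insert w B)" using B(2) wn vec.independent_insertI by blast
  have sp: "UNIV \<subseteq> vec.span (insert w B)"
  proof
    fix x :: "'a^'n"
    define c where "c = dotp f x / dotp f w"
    have "x - c *s w \<in> kerf f" using dw by (simp add: kerf_def dotp_diff dotp_scale c_def)
    then have "x - c *s w \<in> vec.span (insert w B)"
      using B(3) vec.span_mono[of B "insert w B"] by blast
    moreover have "c *s w \<in> vec.span (insert w B)"
      by (simp add: vec.span_base vec.span_scale)
    ultimately have "(x - c *s w) + c *s w \<in> vec.span (insert w B)" by (rule vec.span_add)
    then show "x \<in> vec.span (insert w B)" by simp
  qed
  have "card (insert w B) = vec.dim (UNIV :: ('a^'n) set)"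
    by (rule vec.basis_card_eq_dim[OF _ sp ind]) simp
  then have "card B + 1 = CARD('n)" using fin wB by (simp add: card_cart_basis)
  then have "vec.dim (kerf f) = CARD('n) - 1" using B(4) by linarith
  then show ?thesis unfolding pg_hyperplane_def using kerf_subspace[of f] by blast
qed


lemma hyperplane_kerf:
  assumes "pg_hyperplane (H :: ('a::{finite,field}^'n) set)"
  shows "\<exists>h. h \<noteq> 0 \<and> H = kerf h"
proof -
  have sH: "vec.subspace H" and dH: "vec.dim H = CARD('n) - 1"
    using assms by (auto simp: pg_hyperplane_def)
  obtain B where B: "B \<subseteq> H" "vec.independent B" "H \<subseteq> vec.span B" "card B = vec.dim H"
    by (rule vec.basis_exists)
  have fin: "finite B" using B(2) vec.finiteI_independent by blast
  have cB: "card B < CARD('n)" using B(4) dH by simp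
  obtain g :: "'a^'n \<Rightarrow> 'n" where g: "g ` B \<subseteq> UNIV" "inj_on g B"
    using card_le_inj[OF fin, of "UNIV::'n set"] cB by auto
  have "card (g ` B) < CARD('n)" using cB card_image[OF g(2)] by simp
  then have "g ` B \<noteq> UNIV" by auto
  then obtain i0 where i0: "i0 \<notin> g ` B" by blast
  define \<beta> where "\<beta> i = (if i \<in> g ` B then the_inv_into B g i else 0)" for i
  have \<beta>g: "\<beta> (g b) = b" if "b \<in> B" for b
    using that g(2) by (simp add: \<beta>_def the_inv_into_f_f)
  have \<beta>0: "\<beta> i0 = 0" using i0 by (simp add: \<beta>_def)
  define L where "L f = (\<chi> i. dotp f (\<beta> i))" for f :: "'a^'n"
  have "axis i0 1 \<notin> range L"
  proof
    assume "axis i0 1 \<in> range L"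
    then obtain f where "axis i0 1 = L f" by blast
    then have "(axis i0 1 :: 'a^'n) $ i0 = L f $ i0" by simp
    then show False by (simp add: L_def \<beta>0 axis_def)
  qed
  then have "\<not> inj L" using finite_UNIV_inj_surj[of L] by auto
  then obtain f1 f2 where f12: "f1 \<noteq> f2" "L f1 = L f2" unfolding inj_def by blast
  define h where "h = f1 - f2"
  have h0: "h \<noteq> 0" using f12(1) by (simp add: h_def)
  have "B \<subseteq> kerf h"
  proof
    fix b assume b: "b \<in> B"
    have "L f1 $ g b = L f2 $ g b" using f12(2) by simp
    then show "b \<in> kerf h" using b by (simp add: L_def \<beta>g kerf_def h_def dotp_diff_l)
  qed
  then have sub: "H \<subseteq> kerf h" using B(3) vec.span_minimal[OF _ kerf_subspace] by blast
  have hk: "pg_hyperplane (kerf h)" using kerf_hyperplane[OF h0] .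
  have "H = kerf h"
    by (rule vec.subspace_dim_equal[OF sH kerf_subspace sub]) (use hk dH in \<open>simp add: pg_hyperplane_def\<close>)
  then show ?thesis using h0 by blast
qed

lemma kerf_subset_scale:
  assumes f0: "(f::'a::field^'n) \<noteq> 0" and sub: "kerf f \<subseteq> kerf g"
  shows "\<exists>c. g = c *s f"
proof -
  obtain i where fi: "f$i \<noteq> 0" using f0 nonzero_axis by blast
  define w :: "'a^'n" where "w = axis i 1"
  have dw: "dotp f w \<noteq> 0" using fi by (simp add: w_def dotp_axis)
  define c where "c = dotp g w / dotp f w"
  have all: "dotp g x = c * dotp f x" for x
  proof -
    define t where "t = dotp f x / dotp f w"
    have "x - t *s w \<in> kerf f" using dw by (simp add: kerf_def dotp_diff dotp_scale t_def)
    then have "dotp g (x - t *s w) = 0" using sub by (auto simp: kerf_def)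
    then have "dotp g x = t * dotp g w" by (simp add: dotp_diff dotp_scale)
    then show ?thesis using dw by (simp add: t_def c_def field_simps)
  qed
  have "g = c *s f"
  proof (unfold vec_eq_iff, rule allI)
    fix j
    have "g $ j = dotp g (axis j 1)" by (simp add: dotp_axis)
    also have "\<dots> = c * f $ j" using all[of "axis j 1"] by (simp only: dotp_axis)
    finally show "g $ j = (c *s f) $ j" by simp
  qed
  then show ?thesis by blast
qed

lemma kerf_scale: "(c::'a::field) \<noteq> 0 \<Longrightarrow> kerf (c *s f) = kerf f"
  by (auto simp: kerf_def dotp_scale_l)

lemma card_split:
  fixes X :: "('a::{finite,field}^'n) set"
  assumes u: "dotp u p = 1" and cl: "\<And>x c. x \<in> X \<Longrightarrow> x + c *s u \<in> X"
  shows "card {x\<in>X. dotp x p = 0} * CARD('a) = card X"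
proof -
  let ?K = "{x\<in>X. dotp x p = 0}"
  have clm: "x - c *s u \<in> X" if "x \<in> X" for x c
  proof -
    have "x + (-c) *s u = x - c *s u" by (simp add: vec_eq_iff)
    then show ?thesis using cl[OF that, of "-c"] by simp
  qed
  have "bij_betw (\<lambda>(x,c). x + c *s u) (?K \<times> UNIV) X"
  proof (rule bij_betw_byWitness[where f'="\<lambda>y. (y - dotp y p *s u, dotp y p)"])
    show "\<forall>a\<in>?K \<times> UNIV. (\<lambda>y. (y - dotp y p *s u, dotp y p)) ((\<lambda>(x, c). x + c *s u) a) = a"
    proof
      fix a assume "a \<in> ?K \<times> (UNIV::'a set)"
      then obtain x c where a: "a = (x,c)" "dotp x p = 0" by auto
      have "dotp (x + c *s u) p = c" using a u by (simp add: dotp_add_l dotp_scale_l)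
      then show "(\<lambda>y. (y - dotp y p *s u, dotp y p)) ((\<lambda>(x, c). x + c *s u) a) = a"
        using a by simp
    qed
    show "\<forall>a'\<in>X. (\<lambda>(x, c). x + c *s u) ((\<lambda>y. (y - dotp y p *s u, dotp y p)) a') = a'"
      by simp
    show "(\<lambda>(x, c). x + c *s u) ` (?K \<times> UNIV) \<subseteq> X" using cl by auto
    show "(\<lambda>y. (y - dotp y p *s u, dotp y p)) ` X \<subseteq> ?K \<times> UNIV"
    proof
      fix z assume "z \<in> (\<lambda>y. (y - dotp y p *s u, dotp y p)) ` X"
      then obtain y where y: "y \<in> X" "z = (y - dotp y p *s u, dotp y p)" by blast
      have "dotp (y - dotp y p *s u) p = 0" using u by (simp add: dotp_diff_l dotp_scale_l)
      then show "z \<in> ?K \<times> UNIV" using y clm by auto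
    qed
  qed
  then have "card (?K \<times> (UNIV::'a set)) = card X" by (rule bij_betw_same_card)
  then show ?thesis by (simp add: card_cartesian_product)
qed


lemma card_ind: "finite A \<Longrightarrow> real (card {x\<in>A. P x}) = (\<Sum>x\<in>A. if P x then 1 else 0)"
  by (simp add: sum.inter_filter[symmetric])

lemma card_vec_real: "real (card (UNIV :: ('a::finite^'n) set)) = real CARD('a) ^ CARD('n)"
  by simp

lemma cnt1:
  fixes p :: "'a::{finite,field}^'n"
  assumes "p \<noteq> 0"
  shows "real (card {f. dotp f p = 0}) = real CARD('a) ^ CARD('n) / real CARD('a)"
proof -
  obtain i where pi: "p$i \<noteq> 0" using assms nonzero_axis by blast
  define u :: "'a^'n" where "u = (1 / p$i) *s axis i 1"
  have u: "dotp u p = 1" using pi by (simp add: u_def dotp_scale_l dotp_comm[of "axis i 1"] dotp_axis)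
  have "card {x\<in>UNIV. dotp x p = 0} * CARD('a) = card (UNIV :: ('a^'n) set)"
    by (rule card_split[OF u]) simp
  then have "real (card {f. dotp f p = 0}) * real CARD('a) = real CARD('a) ^ CARD('n)"
    by (metis (no_types, lifting) Collect_cong UNIV_I card_vec_real of_nat_mult)
  then show ?thesis by (simp add: field_simps)
qed

lemma cnt2:
  fixes p p' :: "'a::{finite,field}^'n"
  assumes p0: "p \<noteq> 0" and np: "\<forall>c. p' \<noteq> c *s p"
  shows "real (card {f. dotp f p = 0 \<and> dotp f p' = 0}) = real CARD('a) ^ CARD('n) / real CARD('a) ^ 2"
proof -
  have "\<not> kerf p \<subseteq> kerf p'" using kerf_subset_scale[OF p0, of p'] np by blast
  then obtain y where y: "dotp p y = 0" "dotp p' y \<noteq> 0" by (auto simp: kerf_def)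
  define u where "u = (1 / dotp p' y) *s y"
  have u1: "dotp u p' = 1" using y by (simp add: u_def dotp_scale_l dotp_comm[of y])
  have u0: "dotp u p = 0" using y by (simp add: u_def dotp_scale_l dotp_comm[of y])
  have "card {x\<in>{f. dotp f p = 0}. dotp x p' = 0} * CARD('a) = card {f. dotp f p = 0}"
    by (rule card_split[OF u1]) (simp add: dotp_add_l dotp_scale_l u0)
  then have "real (card {f. dotp f p = 0 \<and> dotp f p' = 0}) * real CARD('a) = real (card {f. dotp f p = 0})"
    by (metis (no_types, lifting) Collect_cong mem_Collect_eq of_nat_mult)
  also have "\<dots> = real CARD('a) ^ CARD('n) / real CARD('a)" by (rule cnt1[OF p0])
  finally show ?thesis by (simp add: field_simps power2_eq_square)
qed

lemma span_scale_eq: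
  fixes p :: "'a::field^'n"
  assumes "c \<noteq> 0" shows "vec.span {c *s p} = vec.span {p}"
proof -
  have "range (\<lambda>k. k *s (c *s p)) = range (\<lambda>k. k *s p)"
  proof
    show "range (\<lambda>k. k *s (c *s p)) \<subseteq> range (\<lambda>k. k *s p)" by auto
    show "range (\<lambda>k. k *s p) \<subseteq> range (\<lambda>k. k *s (c *s p))"
    proof
      fix x assume "x \<in> range (\<lambda>k. k *s p)"
      then obtain k where "x = k *s p" by blast
      then have "x = (k / c) *s (c *s p)" using assms by simp
      then show "x \<in> range (\<lambda>k. k *s (c *s p))" by blast
    qed
  qed
  then show ?thesis by (simp add: vec.span_singleton)
qed

lemma field_card_ge2: "CARD('a::{finite,field}) \<ge> 2"
proof -
  have "card {0::'a, 1} \<le> CARD('a)" by (rule card_mono) auto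
  then show ?thesis by simp
qed


lemma nat_quad_nonneg: "(real (k::nat) - 1) * (real k - 2) \<ge> 0"
proof (cases "k \<le> 1")
  case True then have "k = 0 \<or> k = 1" by auto
  then show ?thesis by auto
next
  case False then have "real k \<ge> 2" by simp
  then show ?thesis by simp
qed

theorem mainTheorem3:
  fixes S :: "('a::{finite,field} ^ 'n) set set"
    and q r :: nat
  assumes "q = CARD('a)"
    and "r \<ge> 1"
    and "\<forall>P\<in>S. pg_point P"
    and "pg_spanning S"
    and "pg_divisible (q ^ r) S"
    and "card S = q ^ (r + 1)"
  shows "real (card {H. pg_hyperplane H \<and> (\<forall>P\<in>S. \<not> P \<subseteq> H)})
           \<le> (real q powi (int CARD('n) - int r - 1) - real q + 2) / 2"
proof -
  note qdef = assms(1)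
  have q2: "q \<ge> 2" using field_card_ge2 qdef by simp
  define v where "v = CARD('n)"
  define qq where "qq = real q"
  define t where "t = real q ^ r"
  define Q where "Q = real q ^ v"
  define n where "n = real (card S)"
  have qq2: "qq \<ge> 2" using q2 by (simp add: qq_def)
  have tpos: "t > 0" using q2 by (simp add: t_def)
  have nqt: "n = qq * t" using assms(6) by (simp add: n_def qq_def t_def)
  have finS: "finite S" by (rule finite)
  define pt where "pt P = (SOME p. p \<noteq> 0 \<and> P = vec.span {p})" for P :: "('a^'n) set"
  have pt: "pt P \<noteq> 0 \<and> P = vec.span {pt P}" if "P \<in> S" for P
  proof -
    have "\<exists>p. p \<noteq> 0 \<and> P = vec.span {p}" by (rule point_span[OF bspec[OF assms(3) that]])
    then show ?thesis unfolding pt_def by (rule someI_ex)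
  qed
  define m where "m f = card {P\<in>S. P \<subseteq> kerf f}" for f :: "'a^'n"
  define ind where "ind f P = (if dotp f (pt P) = 0 then 1 else 0 :: real)" for f P
  have m_ind: "real (m f) = (\<Sum>P\<in>S. ind f P)" for f
  proof -
    have "{P\<in>S. P \<subseteq> kerf f} = {P\<in>S. dotp f (pt P) = 0}"
      using pt span_sub_kerf by metis
    then show ?thesis unfolding m_def ind_def by (simp add: card_ind[OF finS])
  qed
  have c1: "(\<Sum>f\<in>UNIV. ind f P) = Q / qq" if "P \<in> S" for P
  proof -
    have "(\<Sum>f\<in>UNIV. ind f P) = real (card {f\<in>UNIV. dotp f (pt P) = 0})"
      unfolding ind_def by (rule card_ind[symmetric]) simp
    also have "\<dots> = Q / qq" using cnt1[of "pt P"] pt[OF that]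
      by (simp add: Q_def qq_def v_def qdef)
    finally show ?thesis .
  qed
  have c2: "(\<Sum>f\<in>UNIV. ind f P * ind f P') = (if P = P' then Q / qq else Q / qq^2)"
    if "P \<in> S" "P' \<in> S" for P P'
  proof (cases "P = P'")
    case True
    have "(\<Sum>f\<in>UNIV. ind f P * ind f P') = (\<Sum>f\<in>UNIV. ind f P)"
      using True by (intro sum.cong) (auto simp: ind_def)
    then show ?thesis using c1[OF that(1)] True by simp
  next
    case False
    have np: "\<forall>c. pt P' \<noteq> c *s pt P"
    proof
      fix c show "pt P' \<noteq> c *s pt P"
      proof
        assume e: "pt P' = c *s pt P"
        then have "c \<noteq> 0" using pt[OF that(2)] by auto
        then have "vec.span {pt P'} = vec.span {pt P}" using e span_scale_eq by simp
        then show False using pt[OF that(1)] pt[OF that(2)] False by simp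
      qed
    qed
    have "(\<Sum>f\<in>UNIV. ind f P * ind f P') = real (card {f\<in>UNIV. dotp f (pt P) = 0 \<and> dotp f (pt P') = 0})"
      unfolding ind_def card_ind[OF finite_class.finite_UNIV] by (rule sum.cong) auto
    also have "\<dots> = Q / qq^2" using cnt2[OF _ np] pt[OF that(1)]
      by (simp add: Q_def qq_def v_def qdef)
    finally show ?thesis using False by simp
  qed
  have S1: "(\<Sum>f\<in>UNIV. real (m f)) = n * Q / qq"
  proof -
    have "(\<Sum>f\<in>UNIV. real (m f)) = (\<Sum>P\<in>S. \<Sum>f\<in>UNIV. ind f P)"
      unfolding m_ind by (rule sum.swap)
    also have "\<dots> = (\<Sum>P\<in>S. Q / qq)" using c1 by simp
    finally show ?thesis by (simp add: n_def)
  qed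
  have S2: "(\<Sum>f\<in>UNIV. real (m f) ^ 2) = n * Q / qq + n * (n - 1) * Q / qq^2"
  proof -
    have "(\<Sum>f\<in>UNIV. real (m f) ^ 2) = (\<Sum>f\<in>UNIV. \<Sum>P\<in>S. \<Sum>P'\<in>S. ind f P * ind f P')"
      unfolding m_ind power2_eq_square sum_product by simp
    also have "\<dots> = (\<Sum>P\<in>S. \<Sum>f\<in>UNIV. \<Sum>P'\<in>S. ind f P * ind f P')"
      by (rule sum.swap)
    also have "\<dots> = (\<Sum>P\<in>S. \<Sum>P'\<in>S. \<Sum>f\<in>UNIV. ind f P * ind f P')"
      by (simp add: sum.swap[of _ UNIV])
    also have "\<dots> = (\<Sum>P\<in>S. \<Sum>P'\<in>S. if P = P' then Q / qq else Q / qq^2)"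
      using c2 by (simp cong: sum.cong)
    also have "\<dots> = (\<Sum>P\<in>S. Q / qq + (n - 1) * (Q / qq^2))"
    proof (rule sum.cong[OF refl])
      fix P assume P: "P \<in> S"
      have "(\<Sum>P'\<in>S. if P = P' then Q / qq else Q / qq^2)
          = (if P = P then Q / qq else Q / qq^2) + (\<Sum>P'\<in>S - {P}. if P = P' then Q / qq else Q / qq^2)"
        by (rule sum.remove[OF finS P])
      also have "\<dots> = Q / qq + (\<Sum>P'\<in>S - {P}. Q / qq^2)"
      proof -
        have "(\<Sum>P'\<in>S - {P}. if P = P' then Q / qq else Q / qq^2) = (\<Sum>P'\<in>S - {P}. Q / qq^2)"
          by (rule sum.cong) auto
        then show ?thesis by simp
      qed
      also have "\<dots> = Q / qq + (n - 1) * (Q / qq^2)"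
      proof -
        have "card S > 0" using P finS card_gt_0_iff by blast
        then have "real (card (S - {P})) = n - 1"
          using P finS by (simp add: n_def card_Diff_singleton of_nat_diff)
        then show ?thesis by simp
      qed
      finally show "(\<Sum>P'\<in>S. if P = P' then Q / qq else Q / qq^2) = Q / qq + (n - 1) * (Q / qq^2)" .
    qed
    finally show ?thesis by (simp add: n_def algebra_simps)
  qed
  define g where "g f = (real (m f) - t) * (real (m f) - 2 * t)" for f
  have cardU: "real (card (UNIV :: ('a^'n) set)) = Q" by (simp add: Q_def v_def qdef)
  have SU: "(\<Sum>f\<in>UNIV. g f) = t * Q - t * Q / qq"
  proof -
    have "(\<Sum>f\<in>UNIV. g f) = (\<Sum>f\<in>UNIV. real (m f) ^ 2) - 3 * t * (\<Sum>f\<in>UNIV. real (m f)) + 2 * t^2 * Q"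
      unfolding g_def using cardU
      by (simp add: algebra_simps power2_eq_square sum.distrib sum_subtractf sum_distrib_left)
    also have "\<dots> = t * Q - t * Q / qq"
      unfolding S1 S2 nqt using qq2 by (simp add: field_simps power2_eq_square)
    finally show ?thesis .
  qed
  have m0: "real (m 0) = n"
  proof -
    have "kerf (0::'a^'n) = UNIV" by (simp add: kerf_def)
    then show ?thesis by (simp add: m_def n_def)
  qed
  have g_nonneg: "g f \<ge> 0" if "f \<noteq> 0" for f
  proof -
    have "pg_hyperplane (kerf f)" by (rule kerf_hyperplane[OF that])
    then have "m f mod q^r = card S mod q^r" using assms(5) by (simp add: pg_divisible_def m_def)
    also have "\<dots> = 0" using assms(6) by simp
    finally obtain k where k: "m f = q^r * k" by blast
    have "g f = t^2 * ((real k - 1) * (real k - 2))"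
      unfolding g_def k t_def by (simp add: algebra_simps power2_eq_square)
    then show ?thesis using nat_quad_nonneg[of k] by simp
  qed
  define Z where "Z = {f::'a^'n. f \<noteq> 0 \<and> m f = 0}"
  have sumZ: "real (card Z) * (2 * t^2) \<le> t * Q - t * Q / qq - (n - t) * (n - 2 * t)"
  proof -
    have "real (card Z) * (2 * t^2) = (\<Sum>f\<in>Z. g f)"
      by (simp add: Z_def g_def power2_eq_square)
    also have "\<dots> \<le> (\<Sum>f\<in>UNIV - {0}. g f)"
      by (rule sum_mono2) (auto simp: Z_def g_nonneg)
    also have "\<dots> = (\<Sum>f\<in>UNIV. g f) - g 0"
      by (simp add: sum_diff1)
    also have "\<dots> = t * Q - t * Q / qq - (n - t) * (n - 2 * t)"
      using SU m0 by (simp add: g_def)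
    finally show ?thesis .
  qed
  define Hs where "Hs = {H. pg_hyperplane H \<and> (\<forall>P\<in>S. \<not> P \<subseteq> H)}"
  define fH where "fH H = (SOME h. h \<noteq> 0 \<and> H = kerf h)" for H :: "('a^'n) set"
  have fH: "fH H \<noteq> 0 \<and> H = kerf (fH H)" if "H \<in> Hs" for H
  proof -
    have "\<exists>h. h \<noteq> 0 \<and> H = kerf h" using hyperplane_kerf[of H] that by (auto simp: Hs_def)
    then show ?thesis unfolding fH_def by (rule someI_ex)
  qed
  define Fib where "Fib H = (\<lambda>c. c *s fH H) ` (UNIV - {0})" for H
  have cardFib: "card (Fib H) = q - 1" if H: "H \<in> Hs" for H
  proof -
    obtain i where i: "fH H $ i \<noteq> 0" using fH[OF H] nonzero_axis by blast
    have "inj_on (\<lambda>c. c *s fH H) (UNIV - {0})"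
    proof (rule inj_onI)
      fix c d assume eq: "c *s fH H = d *s fH H"
      have "(c *s fH H) $ i = (d *s fH H) $ i" by (simp only: eq)
      then show "c = d" using i by simp
    qed
    then show ?thesis unfolding Fib_def by (simp add: card_image card_Diff_singleton qdef)
  qed
  have FibZ: "Fib H \<subseteq> Z" if H: "H \<in> Hs" for H
  proof
    fix f assume "f \<in> Fib H"
    then obtain c where c: "c \<noteq> 0" "f = c *s fH H" by (auto simp: Fib_def)
    obtain i where i: "fH H $ i \<noteq> 0" using fH[OF H] nonzero_axis by blast
    have "f $ i \<noteq> 0" using c i by simp
    then have "f \<noteq> 0" by auto
    moreover have "kerf f = H" using c fH[OF H] kerf_scale by metis
    ultimately show "f \<in> Z" using H by (simp add: Z_def m_def Hs_def)
  qed
  have disj: "Fib H \<inter> Fib H' = {}" if "H \<in> Hs" "H' \<in> Hs" "H \<noteq> H'" for H H'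
  proof (rule ccontr)
    assume "Fib H \<inter> Fib H' \<noteq> {}"
    then obtain f where "f \<in> Fib H" "f \<in> Fib H'" by blast
    then obtain c c' where f: "c \<noteq> 0" "f = c *s fH H" "c' \<noteq> 0" "f = c' *s fH H'"
      unfolding Fib_def by blast
    have "kerf f = H" using f fH[OF that(1)] kerf_scale by metis
    moreover have "kerf f = H'" using f fH[OF that(2)] kerf_scale by metis
    ultimately show False using that(3) by simp
  qed
  have finHs: "finite Hs" by (rule finite)
  have "card (\<Union>(Fib ` Hs)) = (\<Sum>H\<in>Hs. card (Fib H))"
    by (rule card_UN_disjoint[OF finHs]) (simp_all add: disj)
  also have "\<dots> = card Hs * (q - 1)" using cardFib by simp
  finally have eqU: "card (\<Union>(Fib ` Hs)) = card Hs * (q - 1)" .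
  have "\<Union>(Fib ` Hs) \<subseteq> Z" using FibZ by blast
  then have "card (\<Union>(Fib ` Hs)) \<le> card Z" by (rule card_mono[OF finite])
  then have "card Hs * (q - 1) \<le> card Z" using eqU by simp
  then have "real (card Hs * (q - 1)) \<le> real (card Z)" by (simp only: of_nat_le_iff)
  moreover have "real (q - 1) = qq - 1" using q2 by (simp add: qq_def of_nat_diff)
  ultimately have A: "real (card Hs) * (qq - 1) \<le> real (card Z)" by simp
  have key: "t * Q - t * Q / qq - (n - t) * (n - 2 * t) = t^2 * (qq - 1) * (Q / (qq * t) - qq + 2)"
    unfolding nqt using qq2 tpos by (simp add: field_simps power2_eq_square)
  have "(t^2 * (qq - 1)) * (2 * real (card Hs)) \<le> t^2 * (qq - 1) * (Q / (qq * t) - qq + 2)"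
  proof -
    have "(t^2 * (qq - 1)) * (2 * real (card Hs)) = (real (card Hs) * (qq - 1)) * (2 * t^2)"
      by (simp add: algebra_simps)
    also have "\<dots> \<le> real (card Z) * (2 * t^2)"
      by (rule mult_right_mono[OF A]) simp
    also have "\<dots> \<le> t^2 * (qq - 1) * (Q / (qq * t) - qq + 2)" using sumZ key by simp
    finally show ?thesis .
  qed
  then have "2 * real (card Hs) \<le> Q / (qq * t) - qq + 2"
    using tpos qq2 by (simp add: mult_le_cancel_left_pos)
  moreover have "real q powi (int CARD('n) - int r - 1) = Q / (qq * t)"
  proof -
    have "int CARD('n) - int r - 1 = int v - int (r + 1)" by (simp add: v_def)
    then have "real q powi (int CARD('n) - int r - 1) = real q ^ v / real q ^ (r + 1)"
      using q2 by (simp add: power_int_diff)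
    then show ?thesis by (simp add: Q_def qq_def t_def)
  qed
  ultimately show ?thesis unfolding Hs_def[symmetric] qq_def by simp
qed

end
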